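(* Let $A$ be an $n\times n$ complex matrix with eigenvalues, multiplicities, $P_i$, $N_i$, $B(z)$ and $q_i$ as in the context. Then for each $i$, $$P_i=\frac{1}{(n_i-1)!}\frac{d^{n_i-1}}{dz^{n_i-1}}\left(\frac{B(z)}{q_i(z)}\right)\Big|_{z=\lambda_i},$$ and, if $n_i\ge 2$, $$N_iP_i=\frac{1}{(n_i-2)!}\frac{d^{n_i-2}}{dz^{n_i-2}}\left(\frac{B(z)}{q_i(z)}\right)\Big|_{z=\lambda_i}.$$
   Context: For an $n\times n$ complex matrix $A$ with distinct eigenvalues $\lambda_1,\dots,\lambda_m$ and algebraic multiplicities $n_1,\dots,n_m$, let $W_i=\ker(A-\lambda_i\mathbb{1})^{n_i}$ be the generalized eigenspace of $\lambda_i$, so $\mathbb{C}^n=\bigoplus_i W_i$. Let $P_i$ be the projection onto $W_i$ along $\bigoplus_{j\ne i}W_j$, and let $N_i=(A-\lambda_i\mathbb{1})P_i$. Let $p(z)=\det(z\mathbb{1}-A)=\prod_{j}(z-\lambda_j)^{n_j}$, $B(z)=\operatorname{Adj}(z\mathbb{1}-A)$ (adjugate matrix), and $q_i(z)=\prod_{j\ne i}(z-\lambda_j)^{n_j}$, which is nonzero near $\lambda_i$ so $B(z)/q_i(z)$ is analytic near $\lambda_i$. *)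

theory Defs
  imports "HOL-Analysis.Derivative" "Jordan_Normal_Form.Char_Poly" "Jordan_Normal_Form.Determinant"
begin

definition alg_mult :: "complex mat \<Rightarrow> complex \<Rightarrow> nat" where
  "alg_mult A lam = order lam (char_poly A)"

definition gen_eigenspace :: "complex mat \<Rightarrow> complex \<Rightarrow> complex Matrix.vec set" where
  "gen_eigenspace A lam = {v \<in> carrier_vec (dim_row A).
      ((A - lam \<cdot>\<^sub>m 1\<^sub>m (dim_row A)) ^\<^sub>m alg_mult A lam) *\<^sub>v v = 0\<^sub>v (dim_row A)}"

definition spectral_proj :: "complex mat \<Rightarrow> complex \<Rightarrow> complex mat" where
  "spectral_proj A lam = (THE P. P \<in> carrier_mat (dim_row A) (dim_row A) \<and>
      (\<forall>v \<in> gen_eigenspace A lam. P *\<^sub>v v = v) \<and>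
      (\<forall>mu. eigenvalue A mu \<and> mu \<noteq> lam \<longrightarrow> (\<forall>v \<in> gen_eigenspace A mu. P *\<^sub>v v = 0\<^sub>v (dim_row A))))"

definition nilp_part :: "complex mat \<Rightarrow> complex \<Rightarrow> complex mat" where
  "nilp_part A lam = (A - lam \<cdot>\<^sub>m 1\<^sub>m (dim_row A)) * spectral_proj A lam"

definition adj_res :: "complex mat \<Rightarrow> complex \<Rightarrow> complex mat" where
  "adj_res A z = adj_mat (z \<cdot>\<^sub>m 1\<^sub>m (dim_row A) - A)"

definition q_fun :: "complex mat \<Rightarrow> complex \<Rightarrow> complex \<Rightarrow> complex" where
  "q_fun A lam z = (\<Prod>mu \<in> {mu. eigenvalue A mu \<and> mu \<noteq> lam}. (z - mu) ^ alg_mult A mu)"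

end

theory Submission imports Defs "HOL-Analysis.FPS_Convergence" "HOL-Computational_Algebra.Fundamental_Theorem_Algebra" "HOL-Computational_Algebra.Field_as_Ring" "HOL-Computational_Algebra.Polynomial_Factorial"
begin

definition mpoly :: "complex mat \<Rightarrow> complex poly \<Rightarrow> complex mat" where
  "mpoly A p = mat (dim_row A) (dim_row A) (\<lambda>(i,j). \<Sum>k\<le>degree p. coeff p k * (A ^\<^sub>m k) $$ (i,j))"

lemma mpoly_bound:
  assumes "degree p < N"
  shows "mpoly A p = mat (dim_row A) (dim_row A) (\<lambda>(i,j). \<Sum>k<N. coeff p k * (A ^\<^sub>m k) $$ (i,j))"
proof -
  have "(\<Sum>k<N. coeff p k * (A ^\<^sub>m k) $$ (i,j)) = (\<Sum>k\<le>degree p. coeff p k * (A ^\<^sub>m k) $$ (i,j))" for i j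
    by (rule sum.mono_neutral_right) (use assms in \<open>auto simp: coeff_eq_0\<close>)
  thus ?thesis unfolding mpoly_def by simp
qed

lemma dim_mpoly[simp]: "dim_row (mpoly A p) = dim_row A" "dim_col (mpoly A p) = dim_row A"
  unfolding mpoly_def by auto

lemma mpoly_carrier[simp]: "A \<in> carrier_mat n n \<Longrightarrow> mpoly A p \<in> carrier_mat n n"
  unfolding mpoly_def by auto

lemma pow_mat_Suc_left: "A \<in> carrier_mat n n \<Longrightarrow> A ^\<^sub>m (Suc k) = A * A ^\<^sub>m k"
proof (induction k)
  case 0 then show ?case by simp
next
  case (Suc k)
  have "A ^\<^sub>m Suc (Suc k) = (A * A ^\<^sub>m k) * A" using Suc by simp
  also have "\<dots> = A * (A ^\<^sub>m k * A)" using Suc.prems by (simp add: assoc_mult_mat[of _ n n _ n _ n])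
  finally show ?case by simp
qed

lemma mpoly_pCons:
  assumes A: "A \<in> carrier_mat n n"
  shows "mpoly A (pCons a p) = a \<cdot>\<^sub>m 1\<^sub>m n + A * mpoly A p"
proof -
  define N where "N = Suc (degree p)"
  have d1: "degree (pCons a p) < Suc N" unfolding N_def by (simp add: degree_pCons_le le_imp_less_Suc)
  have d2: "degree p < N" unfolding N_def by simp
  show ?thesis
  proof (rule eq_matI)
    fix i j assume ij: "i < dim_row (a \<cdot>\<^sub>m 1\<^sub>m n + A * mpoly A p)" "j < dim_col (a \<cdot>\<^sub>m 1\<^sub>m n + A * mpoly A p)"
    hence i: "i < n" and j: "j < n" using A by auto
    have "mpoly A (pCons a p) $$ (i,j) = (\<Sum>k<Suc N. coeff (pCons a p) k * (A ^\<^sub>m k) $$ (i,j))"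
      using A i j by (simp add: mpoly_bound[OF d1])
    also have "\<dots> = a * (if i = j then 1 else 0) + (\<Sum>k<N. coeff p k * (A ^\<^sub>m Suc k) $$ (i,j))"
      using A i j by (subst sum.lessThan_Suc_shift) simp
    also have "(\<Sum>k<N. coeff p k * (A ^\<^sub>m Suc k) $$ (i,j)) = (\<Sum>k<N. \<Sum>l<n. coeff p k * (A $$ (i,l) * (A ^\<^sub>m k) $$ (l,j)))"
      using A i j by (simp del: pow_mat.simps add: pow_mat_Suc_left[OF A] scalar_prod_def sum_distrib_left lessThan_atLeast0)
    also have "\<dots> = (\<Sum>l<n. A $$ (i,l) * (\<Sum>k<N. coeff p k * (A ^\<^sub>m k) $$ (l,j)))"
      by (subst sum.swap) (simp add: sum_distrib_left mult_ac)
    also have "\<dots> = (A * mpoly A p) $$ (i,j)"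
      using A i j by (simp add: mpoly_bound[OF d2] scalar_prod_def lessThan_atLeast0)
    finally show "mpoly A (pCons a p) $$ (i,j) = (a \<cdot>\<^sub>m 1\<^sub>m n + A * mpoly A p) $$ (i,j)"
      using A i j by simp
  qed (use A in auto)
qed

lemma mpoly_0[simp]: "mpoly A 0 = 0\<^sub>m (dim_row A) (dim_row A)"
  unfolding mpoly_def by (rule eq_matI) auto

lemma mpoly_add:
  assumes A: "A \<in> carrier_mat n n"
  shows "mpoly A (p + q) = mpoly A p + mpoly A q"
proof (induction p arbitrary: q rule: pCons_induct)
  case 0 then show ?case using A by simp
next
  case (pCons a p)
  obtain b q' where q: "q = pCons b q'" by (cases q) auto
  have "mpoly A (pCons a p + q) = (a + b) \<cdot>\<^sub>m 1\<^sub>m n + A * (mpoly A p + mpoly A q')"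
    using pCons A by (simp add: q mpoly_pCons)
  also have "\<dots> = (a \<cdot>\<^sub>m 1\<^sub>m n + A * mpoly A p) + (b \<cdot>\<^sub>m 1\<^sub>m n + A * mpoly A q')"
    using A by (subst mult_add_distrib_mat[of _ n n _ n]) (auto intro!: eq_matI simp: algebra_simps)
  finally show ?case using A by (simp add: q mpoly_pCons)
qed


lemma mpoly_smult:
  assumes A: "A \<in> carrier_mat n n"
  shows "mpoly A (Polynomial.smult c p) = c \<cdot>\<^sub>m mpoly A p"
proof (induction p rule: pCons_induct)
  case 0 then show ?case using A by (auto intro!: eq_matI)
next
  case (pCons a p)
  have "mpoly A (Polynomial.smult c (pCons a p)) = (c*a) \<cdot>\<^sub>m 1\<^sub>m n + A * (c \<cdot>\<^sub>m mpoly A p)"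
    using pCons A by (simp add: mpoly_pCons)
  also have "\<dots> = c \<cdot>\<^sub>m (a \<cdot>\<^sub>m 1\<^sub>m n + A * mpoly A p)"
    using A by (auto intro!: eq_matI simp: algebra_simps mult_smult_distrib[of _ n n _ n])
  finally show ?case using A by (simp add: mpoly_pCons)
qed

lemma mpoly_mult:
  assumes A: "A \<in> carrier_mat n n"
  shows "mpoly A (p * q) = mpoly A p * mpoly A q"
proof (induction p rule: pCons_induct)
  case 0 then show ?case using A by simp
next
  case (pCons a p)
  have "pCons a p * q = Polynomial.smult a q + pCons 0 (p * q)" by simp
  hence "mpoly A (pCons a p * q) = a \<cdot>\<^sub>m mpoly A q + (0 \<cdot>\<^sub>m 1\<^sub>m n + A * (mpoly A p * mpoly A q))"
    using pCons A by (simp add: mpoly_pCons mpoly_add[OF A] mpoly_smult[OF A])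
  also have "\<dots> = (a \<cdot>\<^sub>m 1\<^sub>m n + A * mpoly A p) * mpoly A q"
    using A by (subst add_mult_distrib_mat[of _ n n _ _ n]) 
      (auto intro!: eq_matI simp: algebra_simps assoc_mult_mat[of _ n n _ n _ n])
  finally show ?case using A by (simp add: mpoly_pCons)
qed

lemma mpoly_1[simp]: "A \<in> carrier_mat n n \<Longrightarrow> mpoly A 1 = 1\<^sub>m n"
  by (simp add: one_pCons mpoly_pCons del: pCons_one) (auto intro!: eq_matI)

lemma mpoly_lin: "A \<in> carrier_mat n n \<Longrightarrow> mpoly A [:-c, 1:] = A - c \<cdot>\<^sub>m 1\<^sub>m n"
  by (simp add: mpoly_pCons) (auto intro!: eq_matI)

lemma mpoly_power: "A \<in> carrier_mat n n \<Longrightarrow> mpoly A (p ^ k) = mpoly A p ^\<^sub>m k"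
proof (induction k)
  case (Suc k)
  thus ?case using pow_mat_Suc_left[of "mpoly A p" n k] by (simp add: mpoly_mult)
qed simp

lemma mpoly_comm: "A \<in> carrier_mat n n \<Longrightarrow> mpoly A p * mpoly A q = mpoly A q * mpoly A p"
  by (metis mpoly_mult mult.commute)


lemma cpm_entry:
  assumes A: "A \<in> carrier_mat n n" and l: "l < n" and j: "j < n"
  shows "char_poly_matrix A $$ (l,j) = [:-(A $$ (l,j)), (if l = j then 1 else 0):]"
  using A l j by (auto simp: char_poly_matrix_def)

definition bb :: "complex mat \<Rightarrow> nat \<Rightarrow> nat \<Rightarrow> complex poly" where
  "bb A i j = adj_mat (char_poly_matrix A) $$ (i,j)"

lemma PI_right:
  assumes A: "A \<in> carrier_mat n n" and i: "i < n" and j: "j < n"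
  shows "(\<Sum>l<n. bb A i l * [:-(A $$ (l,j)), (if l = j then 1 else 0):]) = (if i = j then char_poly A else 0)"
proof -
  have C: "char_poly_matrix A \<in> carrier_mat n n" using A by simp
  have "(adj_mat (char_poly_matrix A) * char_poly_matrix A) $$ (i,j) = (if i = j then char_poly A else 0)"
    using adj_mat(3)[OF C] i j by (simp add: char_poly_def)
  moreover have "(adj_mat (char_poly_matrix A) * char_poly_matrix A) $$ (i,j) = 
     (\<Sum>l<n. adj_mat (char_poly_matrix A) $$ (i,l) * char_poly_matrix A $$ (l,j))"
    using i j by (simp add: carrier_matD[OF adj_mat(1)[OF C]] carrier_matD[OF C] scalar_prod_def lessThan_atLeast0)
  also have "\<dots> = (\<Sum>l<n. bb A i l * [:-(A $$ (l,j)), (if l = j then 1 else 0):])"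
    by (rule sum.cong[OF refl]) (simp add: bb_def cpm_entry[OF A _ j])
  ultimately show ?thesis by simp
qed

lemma coeff_mult_lin:
  "coeff (p * [:c, d:]) k = c * coeff p k + d * (if k = 0 then 0 else coeff p (k - 1))"
proof -
  have "p * [:c, d:] = Polynomial.smult c p + pCons 0 (Polynomial.smult d p)"
    by (simp add: mult_pCons_right algebra_simps)
  thus ?thesis by (cases k) auto
qed

definition Bk :: "complex mat \<Rightarrow> nat \<Rightarrow> complex mat" where
  "Bk A k = mat (dim_row A) (dim_row A) (\<lambda>(i,j). coeff (bb A i j) k)"

definition Bprev :: "complex mat \<Rightarrow> nat \<Rightarrow> complex mat" where
  "Bprev A k = (if k = 0 then 0\<^sub>m (dim_row A) (dim_row A) else Bk A (k - 1))"

lemma dim_Bk[simp]: "dim_row (Bk A k) = dim_row A" "dim_col (Bk A k) = dim_row A"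
  unfolding Bk_def by auto
lemma dim_Bprev[simp]: "dim_row (Bprev A k) = dim_row A" "dim_col (Bprev A k) = dim_row A"
  unfolding Bprev_def by auto

lemma Bk_carrier[simp]: "A \<in> carrier_mat n n \<Longrightarrow> Bk A k \<in> carrier_mat n n"
  unfolding Bk_def by auto
lemma Bprev_carrier[simp]: "A \<in> carrier_mat n n \<Longrightarrow> Bprev A k \<in> carrier_mat n n"
  unfolding Bprev_def by auto

lemma B_rel:
  assumes A: "A \<in> carrier_mat n n"
  shows "coeff (char_poly A) k \<cdot>\<^sub>m 1\<^sub>m n = Bprev A k - Bk A k * A"
proof (rule eq_matI)
  fix i j assume "i < dim_row (Bprev A k - Bk A k * A)" "j < dim_col (Bprev A k - Bk A k * A)"
  hence i: "i < n" and j: "j < n" using A by auto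
  have "coeff (if i = j then char_poly A else 0) k = 
        coeff (\<Sum>l<n. bb A i l * [:-(A $$ (l,j)), (if l = j then 1 else 0):]) k"
    using PI_right[OF A i j] by simp
  also have "\<dots> = (\<Sum>l<n. - (A $$ (l,j)) * coeff (bb A i l) k + 
         (if l = j then (if k = 0 then 0 else coeff (bb A i l) (k - 1)) else 0))"
    by (simp only: coeff_sum coeff_mult_lin) (rule sum.cong, auto)
  also have "\<dots> = (\<Sum>l<n. - (A $$ (l,j)) * coeff (bb A i l) k) + 
         (\<Sum>l<n. if l = j then (if k = 0 then 0 else coeff (bb A i l) (k - 1)) else 0)"
    by (rule sum.distrib)
  also have "\<dots> = (\<Sum>l<n. - (A $$ (l,j)) * coeff (bb A i l) k) + (if k = 0 then 0 else coeff (bb A i j) (k - 1))"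
    using j by (simp add: sum.delta)
  also have "\<dots> = (Bprev A k - Bk A k * A) $$ (i,j)"
    using A i j by (auto simp: Bprev_def Bk_def scalar_prod_def lessThan_atLeast0 sum_negf mult_ac)
  finally show "(coeff (char_poly A) k \<cdot>\<^sub>m 1\<^sub>m n) $$ (i, j) = (Bprev A k - Bk A k * A) $$ (i, j)"
    using i j by (auto split: if_splits)
qed (use A in auto)


lemma B_step:
  assumes A: "A \<in> carrier_mat n n"
  shows "coeff (char_poly A) k \<cdot>\<^sub>m A ^\<^sub>m k = Bprev A k * A ^\<^sub>m k - Bprev A (Suc k) * A ^\<^sub>m (Suc k)"
proof -
  have "coeff (char_poly A) k \<cdot>\<^sub>m A ^\<^sub>m k = (coeff (char_poly A) k \<cdot>\<^sub>m 1\<^sub>m n) * A ^\<^sub>m k"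
    using A by (auto intro!: eq_matI)
  also have "\<dots> = (Bprev A k - Bk A k * A) * A ^\<^sub>m k" by (simp add: B_rel[OF A])
  also have "\<dots> = Bprev A k * A ^\<^sub>m k - (Bk A k * A) * A ^\<^sub>m k"
    using A by (intro minus_mult_distrib_mat[of _ n n]) auto
  also have "(Bk A k * A) * A ^\<^sub>m k = Bprev A (Suc k) * A ^\<^sub>m (Suc k)"
    using A by (simp del: pow_mat.simps add: pow_mat_Suc_left[OF A] Bprev_def assoc_mult_mat[of _ n n _ n _ n])
  finally show ?thesis .
qed

lemma cayley_hamilton:
  assumes A: "A \<in> carrier_mat n n"
  shows "mpoly A (char_poly A) = 0\<^sub>m n n"
proof -
  define D where "D = n + (\<Sum>i<n. \<Sum>l<n. degree (bb A i l))"
  have degb: "degree (bb A i l) \<le> D" if "i < n" "l < n" for i l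
  proof -
    have "degree (bb A i l) \<le> (\<Sum>l<n. degree (bb A i l))" using that by (intro member_le_sum) auto
    also have "\<dots> \<le> (\<Sum>i<n. \<Sum>l<n. degree (bb A i l))" 
      using that by (intro member_le_sum[where f = "\<lambda>i. \<Sum>l<n. degree (bb A i l)"]) auto
    finally show ?thesis unfolding D_def by simp
  qed
  have Bz: "Bk A (Suc D) = 0\<^sub>m n n"
    using A degb by (auto intro!: eq_matI simp: Bk_def coeff_eq_0 le_imp_less_Suc)
  define N where "N = Suc (Suc D)"
  have dN: "degree (char_poly A) < N" using degree_monic_char_poly[OF A] unfolding N_def D_def by simp
  show ?thesis
  proof (rule eq_matI)
    fix i j assume "i < dim_row (0\<^sub>m n n :: complex mat)" "j < dim_col (0\<^sub>m n n :: complex mat)"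
    hence i: "i < n" and j: "j < n" by auto
    define f where "f k = (Bprev A k * A ^\<^sub>m k) $$ (i,j)" for k
    have "mpoly A (char_poly A) $$ (i,j) = (\<Sum>k<N. coeff (char_poly A) k * (A ^\<^sub>m k) $$ (i,j))"
      using A i j by (simp add: mpoly_bound[OF dN])
    also have "\<dots> = (\<Sum>k<N. f k - f (Suc k))"
    proof (rule sum.cong[OF refl])
      fix k
      have "coeff (char_poly A) k * (A ^\<^sub>m k) $$ (i,j) = (coeff (char_poly A) k \<cdot>\<^sub>m A ^\<^sub>m k) $$ (i,j)"
        using A i j by simp
      also have "\<dots> = f k - f (Suc k)" unfolding B_step[OF A] f_def
        using A i j by (subst index_minus_mat) auto
      finally show "coeff (char_poly A) k * (A ^\<^sub>m k) $$ (i,j) = f k - f (Suc k)" .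
    qed
    also have "\<dots> = f 0 - f N" by (rule sum_lessThan_telescope')
    also have "f 0 = 0" using A i j by (simp add: f_def Bprev_def)
    also have "f N = 0" using A i j by (simp add: f_def Bprev_def N_def Bz)
    finally show "mpoly A (char_poly A) $$ (i,j) = 0\<^sub>m n n $$ (i,j)" using i j by simp
  qed (use A in auto)
qed


lemma lin_coprime:
  assumes "(a::complex) \<noteq> b"
  shows "coprime [:-a,1:] [:-b,1:]"
proof (rule coprimeI)
  fix c assume "c dvd [:-a,1:]" "c dvd [:-b,1:]"
  hence "c dvd [:-a,1:] - [:-b,1:]" by (rule dvd_diff)
  moreover have "[:-a,1:] - [:-b,1:] = [:b-a:]" by simp
  moreover have "is_unit [:b - a:]" using assms by (simp add: is_unit_const_poly_iff)
  ultimately show "is_unit c" using dvd_unit_imp_unit by metis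
qed

lemma coprime_pow_prod:
  assumes "finite S" "mu \<notin> S"
  shows "coprime ([:-mu,1:]^k) (\<Prod>nu\<in>S. [:-nu,1:]^(e nu) :: complex poly)"
proof -
  have "coprime [:-mu,1:] [:-nu,1:]" if "nu \<in> S" for nu using lin_coprime that assms by metis
  thus ?thesis by (intro prod_coprime_right) auto
qed

lemma bezout_poly:
  assumes "coprime p (q :: complex poly)"
  shows "\<exists>a b. a * p + b * q = 1"
  using bezout_coefficients_fst_snd[of p q] coprime_imp_gcd_eq_1[OF assms] by metis

lemma mat_zero_vec[simp]: "X \<in> carrier_mat m n \<Longrightarrow> X *\<^sub>v 0\<^sub>v n = 0\<^sub>v m"
  by (auto intro!: eq_vecI simp: scalar_prod_def)

lemma zero_mat_vec[simp]: "v \<in> carrier_vec n \<Longrightarrow> 0\<^sub>m m n *\<^sub>v v = 0\<^sub>v m"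
  by (auto intro!: eq_vecI simp: scalar_prod_def)

lemma mpoly_zero_vec[simp]: "A \<in> carrier_mat n n \<Longrightarrow> mpoly A p *\<^sub>v 0\<^sub>v n = 0\<^sub>v n"
  by (rule mat_zero_vec) simp

lemma mpoly_vec_carrier[simp]: "A \<in> carrier_mat n n \<Longrightarrow> v \<in> carrier_vec n \<Longrightarrow> mpoly A p *\<^sub>v v \<in> carrier_vec n"
  by (rule mult_mat_vec_carrier) auto

lemma mpoly_mult_vec: "A \<in> carrier_mat n n \<Longrightarrow> v \<in> carrier_vec n \<Longrightarrow> 
   mpoly A (p * q) *\<^sub>v v = mpoly A p *\<^sub>v (mpoly A q *\<^sub>v v)"
  by (simp add: mpoly_mult assoc_mult_mat_vec[of _ n n _ n])

lemma kernel_U: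
  assumes A: "A \<in> carrier_mat n n" and S: "finite S"
    and X: "X \<in> carrier_mat n n" and Y: "Y \<in> carrier_mat n n"
    and H: "\<And>mu v. mu \<in> S \<Longrightarrow> v \<in> carrier_vec n \<Longrightarrow> mpoly A ([:-mu,1:]^e mu) *\<^sub>v v = 0\<^sub>v n \<Longrightarrow> X *\<^sub>v v = Y *\<^sub>v v"
  shows "v \<in> carrier_vec n \<Longrightarrow> mpoly A (\<Prod>mu\<in>S. [:-mu,1:]^e mu) *\<^sub>v v = 0\<^sub>v n \<Longrightarrow> X *\<^sub>v v = Y *\<^sub>v v"
  using S H
proof (induction S arbitrary: v rule: finite_induct)
  case empty
  hence "v = 0\<^sub>v n" using A by simp
  thus ?case using X Y by simp
next
  case (insert mu S v)
  define g where "g = [:-mu,1:]^e mu"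
  define f where "f = (\<Prod>mu\<in>S. [:-mu,1:]^e mu)"
  have gf: "mpoly A (g * f) *\<^sub>v v = 0\<^sub>v n" using insert by (simp add: g_def f_def)
  obtain a b where ab: "a * g + b * f = 1"
    using bezout_poly[OF coprime_pow_prod[OF insert(1,2)]] unfolding g_def f_def by blast
  define v1 where "v1 = mpoly A (a * g) *\<^sub>v v"
  define v2 where "v2 = mpoly A (b * f) *\<^sub>v v"
  have v: "v \<in> carrier_vec n" by fact
  have vv: "v = v1 + v2"
  proof -
    have "v = mpoly A (a * g + b * f) *\<^sub>v v" using ab A v by simp
    also have "\<dots> = v1 + v2" unfolding v1_def v2_def using A v
      by (simp add: mpoly_add[OF A] add_mult_distrib_mat_vec[of _ n n])
    finally show ?thesis .
  qed
  have c1: "v1 \<in> carrier_vec n" "v2 \<in> carrier_vec n" unfolding v1_def v2_def using A v by auto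
  have "mpoly A f *\<^sub>v v1 = mpoly A a *\<^sub>v (mpoly A (g * f) *\<^sub>v v)"
    unfolding v1_def using A v by (simp add: mpoly_mult_vec[symmetric] mult_ac)
  hence k1: "mpoly A f *\<^sub>v v1 = 0\<^sub>v n" using gf A by simp
  have "mpoly A g *\<^sub>v v2 = mpoly A b *\<^sub>v (mpoly A (g * f) *\<^sub>v v)"
    unfolding v2_def using A v by (simp add: mpoly_mult_vec[symmetric] mult_ac)
  hence k2: "mpoly A g *\<^sub>v v2 = 0\<^sub>v n" using gf A by simp
  have e1: "X *\<^sub>v v1 = Y *\<^sub>v v1" using insert.IH[OF c1(1) k1[unfolded f_def]] insert.prems by blast
  have e2: "X *\<^sub>v v2 = Y *\<^sub>v v2" using insert.prems c1(2) k2 unfolding g_def by blast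
  show ?case using e1 e2 X Y c1 by (simp add: vv mult_add_distrib_mat_vec[of _ n n])
qed


lemma mat_unit_vec_entry:
  fixes X :: "complex mat"
  assumes "X \<in> carrier_mat n n" "i < n" "j < n"
  shows "(X *\<^sub>v unit_vec n j) $ i = X $$ (i,j)"
proof -
  have e: "(\<lambda>ia. X $$ (i,ia) * (if ia = j then 1 else 0)) = (\<lambda>ia. if ia = j then X $$ (i,ia) else 0)"
    by auto
  show ?thesis using assms by (simp add: scalar_prod_def unit_vec_def, subst e, simp)
qed

lemma mat_eq_by_vec:
  fixes X Y :: "complex mat"
  assumes X: "X \<in> carrier_mat n n" and Y: "Y \<in> carrier_mat n n"
    and H: "\<And>v. v \<in> carrier_vec n \<Longrightarrow> X *\<^sub>v v = Y *\<^sub>v v"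
  shows "X = Y"
proof (rule eq_matI)
  fix i j assume "i < dim_row Y" "j < dim_col Y"
  hence i: "i < n" and j: "j < n" using Y by auto
  show "X $$ (i,j) = Y $$ (i,j)"
    using mat_unit_vec_entry[OF X i j] mat_unit_vec_entry[OF Y i j] H[of "unit_vec n j"] by simp
qed (use X Y in auto)

lemma char_poly_nz: "(A :: complex mat) \<in> carrier_mat n n \<Longrightarrow> char_poly A \<noteq> 0"
  using degree_monic_char_poly[of A n] by auto

lemma eig_set: "(A :: complex mat) \<in> carrier_mat n n \<Longrightarrow> {mu. eigenvalue A mu} = {z. poly (char_poly A) z = 0}"
  using eigenvalue_root_char_poly[of A n] by auto

lemma eig_finite: "(A :: complex mat) \<in> carrier_mat n n \<Longrightarrow> finite {mu. eigenvalue A mu}"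
  using eig_set[of A n] char_poly_nz[of A n] poly_roots_finite by metis

lemma cp_decomp:
  fixes A :: "complex mat"
  assumes A: "A \<in> carrier_mat n n"
  shows "char_poly A = (\<Prod>mu\<in>{mu. eigenvalue A mu}. [:-mu,1:]^alg_mult A mu)"
proof -
  have lc: "lead_coeff (char_poly A) = 1" using degree_monic_char_poly[OF A] by simp
  show ?thesis using complex_poly_decompose[of "char_poly A"] unfolding lc eig_set[OF A] alg_mult_def
    by simp
qed

lemma gen_eig_mpoly:
  assumes A: "A \<in> carrier_mat n n"
  shows "gen_eigenspace A mu = {v \<in> carrier_vec n. mpoly A ([:-mu,1:]^alg_mult A mu) *\<^sub>v v = 0\<^sub>v n}"
  using A unfolding gen_eigenspace_def by (simp add: mpoly_power mpoly_lin)

lemma uniq: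
  assumes A: "A \<in> carrier_mat n n" and X: "X \<in> carrier_mat n n" and Y: "Y \<in> carrier_mat n n"
    and H: "\<And>mu v. eigenvalue A mu \<Longrightarrow> v \<in> gen_eigenspace A mu \<Longrightarrow> X *\<^sub>v v = Y *\<^sub>v v"
  shows "X = Y"
proof (rule mat_eq_by_vec[OF X Y])
  fix v :: "complex vec" assume v: "v \<in> carrier_vec n"
  have "mpoly A (\<Prod>mu\<in>{mu. eigenvalue A mu}. [:-mu,1:]^alg_mult A mu) *\<^sub>v v = 0\<^sub>v n"
    using cayley_hamilton[OF A] cp_decomp[OF A] v by simp
  moreover have H': "\<And>mu v. mu \<in> {mu. eigenvalue A mu} \<Longrightarrow> v \<in> carrier_vec n \<Longrightarrow> 
     mpoly A ([:-mu,1:]^alg_mult A mu) *\<^sub>v v = 0\<^sub>v n \<Longrightarrow> X *\<^sub>v v = Y *\<^sub>v v"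
    using H gen_eig_mpoly[OF A] by auto
  ultimately show "X *\<^sub>v v = Y *\<^sub>v v"
    using kernel_U[where e = "alg_mult A", OF A eig_finite[OF A] X Y H' v] by simp
qed


lemma cpm_eval:
  assumes A: "A \<in> carrier_mat n n" and l: "l < n" and k: "k < n"
  shows "poly (char_poly_matrix A $$ (l,k)) z = (z \<cdot>\<^sub>m 1\<^sub>m n - A) $$ (l,k)"
  using A l k by (simp add: cpm_entry)

lemma adj_eval:
  assumes A: "A \<in> carrier_mat n n" and i: "i < n" and j: "j < n"
  shows "poly (bb A i j) z = adj_res A z $$ (i,j)"
proof -
  define C where "C = char_poly_matrix A"
  define Z where "Z = z \<cdot>\<^sub>m 1\<^sub>m n - A"
  have C: "C \<in> carrier_mat n n" unfolding C_def using A by simp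
  have Z: "Z \<in> carrier_mat n n" unfolding Z_def using A by (rule minus_carrier_mat)
  have b: "bb A i j = cofactor C j i" unfolding bb_def adj_mat_def C_def[symmetric] using C i j by simp
  have r: "adj_res A z $$ (i,j) = cofactor Z j i" unfolding adj_res_def adj_mat_def Z_def
    using A i j by simp
  have d: "poly (det (mat_delete C j i)) z = det (mat_delete Z j i)"
  proof (rule poly_det_cong[of _ "n - 1"])
    show "mat_delete Z j i \<in> carrier_mat (n - 1) (n - 1)" using mat_delete_carrier[OF Z] .
    show "mat_delete C j i \<in> carrier_mat (n - 1) (n - 1)" using mat_delete_carrier[OF C] .
    fix a b assume a: "a < n - 1" and bb: "b < n - 1"
    show "poly (mat_delete C j i $$ (a, b)) z = mat_delete Z j i $$ (a, b)"
      unfolding mat_delete_def using C Z a bb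
      by (simp add: C_def Z_def[symmetric] cpm_eval[OF A, folded Z_def])
  qed
  show ?thesis unfolding b r cofactor_def using d by simp
qed


definition Qp :: "complex mat \<Rightarrow> complex \<Rightarrow> complex poly" where
  "Qp A lam = (\<Prod>mu\<in>{mu. eigenvalue A mu \<and> mu \<noteq> lam}. [:-mu,1:]^alg_mult A mu)"

definition Gf :: "complex mat \<Rightarrow> complex \<Rightarrow> nat \<Rightarrow> nat \<Rightarrow> complex fps" where
  "Gf A lam i j = fps_of_poly (pcompose (bb A i j) [:lam,1:]) / fps_of_poly (pcompose (Qp A lam) [:lam,1:])"

lemma cp_factor:
  assumes A: "A \<in> carrier_mat n n" and ev: "eigenvalue A lam"
  shows "char_poly A = [:-lam,1:]^alg_mult A lam * Qp A lam"
proof -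
  have "{mu. eigenvalue A mu} - {lam} = {mu. eigenvalue A mu \<and> mu \<noteq> lam}" by auto
  thus ?thesis unfolding cp_decomp[OF A] Qp_def
    using prod.remove[OF eig_finite[OF A], of lam "\<lambda>mu. [:-mu,1:]^alg_mult A mu"] ev by simp
qed

lemma Qp_fin: "(A :: complex mat) \<in> carrier_mat n n \<Longrightarrow> finite {mu. eigenvalue A mu \<and> mu \<noteq> lam}"
  by (rule finite_subset[OF _ eig_finite[of A n]]) auto

lemma Qp_nz: "A \<in> carrier_mat n n \<Longrightarrow> poly (Qp A lam) lam \<noteq> 0"
  unfolding Qp_def poly_prod using Qp_fin[of A n lam] by (simp add: prod_zero_iff)

lemma Qp_q: "poly (Qp A lam) z = q_fun A lam z"
  by (simp add: Qp_def q_fun_def poly_prod)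

lemma poly_fps_exp: "poly p has_fps_expansion fps_of_poly (p :: complex poly)"
proof -
  have "eval_fps (fps_of_poly p) has_fps_expansion fps_of_poly p"
    by (rule eval_fps_has_fps_expansion) simp
  moreover have "eval_fps (fps_of_poly p) = poly p" by (rule ext) simp
  ultimately show ?thesis by simp
qed

lemma link:
  assumes A: "A \<in> carrier_mat n n" and i: "i < n" and j: "j < n"
  shows "(deriv ^^ t) (\<lambda>z. adj_res A z $$ (i,j) / q_fun A lam z) lam = fact t * fps_nth (Gf A lam i j) t"
proof -
  define b' where "b' = pcompose (bb A i j) [:lam,1:]"
  define Q' where "Q' = pcompose (Qp A lam) [:lam,1:]"
  have f: "(\<lambda>z. adj_res A z $$ (i,j) / q_fun A lam z) \<circ> (\<lambda>x. lam + x) = (\<lambda>x. poly b' x / poly Q' x)"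
    by (rule ext) (simp add: b'_def Q'_def poly_pcompose adj_eval[OF A i j, symmetric] Qp_q[symmetric] add.commute)
  have Q0: "fps_nth (fps_of_poly Q') 0 \<noteq> 0"
    using Qp_nz[OF A, of lam] by (simp add: Q'_def poly_pcompose poly_0_coeff_0[symmetric])
  have ex: "(\<lambda>x. poly b' x / poly Q' x) has_fps_expansion (fps_of_poly b' / fps_of_poly Q')"
    by (rule has_fps_expansion_divide'[OF poly_fps_exp poly_fps_exp Q0])
  have "(deriv ^^ t) (\<lambda>z. adj_res A z $$ (i,j) / q_fun A lam z) lam = (deriv ^^ t) (\<lambda>x. poly b' x / poly Q' x) 0"
    by (subst higher_deriv_shift_0) (simp add: f)
  also have "\<dots> = fact t * fps_nth (Gf A lam i j) t"
    using fps_nth_fps_expansion[OF ex, of t] unfolding Gf_def b'_def[symmetric] Q'_def[symmetric] by simp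
  finally show ?thesis .
qed


lemma pcomp_lin: "pcompose [:-a, d:] [:lam, 1:] = [:-(a - lam * d), (d::complex):]"
  by (simp add: pcompose_pCons algebra_simps)

lemma pcomp_root: "pcompose [:-lam, 1:] [:lam, 1:] = [:0, (1::complex):]"
  by (simp add: pcompose_pCons)

lemma pcomp_power: "pcompose (p ^ k) q = (pcompose p q) ^ k"
  by (induction k) (simp_all add: pcompose_1 pcompose_mult)

lemma fps_rel:
  assumes A: "A \<in> carrier_mat n n" and ev: "eigenvalue A lam" and i: "i < n" and j: "j < n"
  shows "(\<Sum>l<n. Gf A lam i l * fps_of_poly [:-((A - lam \<cdot>\<^sub>m 1\<^sub>m n) $$ (l,j)), (if l = j then 1 else 0):])
         = (if i = j then fps_X ^ alg_mult A lam else 0)"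
proof -
  define Q' where "Q' = fps_of_poly (pcompose (Qp A lam) [:lam,1:])"
  define b' where "b' l = fps_of_poly (pcompose (bb A i l) [:lam,1:])" for l
  define c where "c l = fps_of_poly [:-((A - lam \<cdot>\<^sub>m 1\<^sub>m n) $$ (l,j)), (if l = j then 1 else 0):]" for l
  have Q0: "fps_nth Q' 0 \<noteq> 0"
    using Qp_nz[OF A, of lam] by (simp add: Q'_def poly_pcompose poly_0_coeff_0[symmetric])
  have G: "Gf A lam i l = b' l * inverse Q'" for l
    unfolding Gf_def b'_def[symmetric] Q'_def[symmetric] by (rule fps_divide_unit[OF Q0])
  have cl: "c l = fps_of_poly (pcompose [:-(A $$ (l,j)), (if l = j then 1 else 0):] [:lam,1:])" if "l < n" for l
    unfolding c_def pcomp_lin using A that j by simp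
  have "pcompose (\<Sum>l<n. bb A i l * [:-(A $$ (l,j)), (if l = j then 1 else 0):]) [:lam,1:] = 
        pcompose (if i = j then char_poly A else 0) [:lam,1:]"
    using PI_right[OF A i j] by simp
  hence "fps_of_poly (pcompose (\<Sum>l<n. bb A i l * [:-(A $$ (l,j)), (if l = j then 1 else 0):]) [:lam,1:]) = 
        (if i = j then fps_X ^ alg_mult A lam * Q' else 0)"
    unfolding cp_factor[OF A ev] Q'_def
    by (simp add: pcompose_mult pcomp_power pcomp_root fps_of_poly_mult fps_of_poly_power)
  moreover have "(\<Sum>l<n. b' l * c l) = 
     fps_of_poly (pcompose (\<Sum>l<n. bb A i l * [:-(A $$ (l,j)), (if l = j then 1 else 0):]) [:lam,1:])"
    by (simp only: pcompose_sum pcompose_mult fps_of_poly_sum fps_of_poly_mult b'_def) 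
      (rule sum.cong, simp_all add: cl)
  ultimately have sumeq: "(\<Sum>l<n. b' l * c l) = (if i = j then fps_X ^ alg_mult A lam * Q' else 0)"
    by simp
  have "(\<Sum>l<n. Gf A lam i l * c l) = (\<Sum>l<n. b' l * c l) * inverse Q'"
    unfolding G sum_distrib_right by (simp add: mult_ac)
  also have "\<dots> = (if i = j then fps_X ^ alg_mult A lam else 0)"
    unfolding sumeq using Q0 by (simp add: mult.assoc inverse_mult_eq_1')
  finally show ?thesis unfolding c_def .
qed


definition Hm :: "complex mat \<Rightarrow> complex \<Rightarrow> nat \<Rightarrow> complex mat" where
  "Hm A lam t = mat (dim_row A) (dim_row A) (\<lambda>(i,j). fps_nth (Gf A lam i j) t)"

lemma dim_Hm[simp]: "dim_row (Hm A lam t) = dim_row A" "dim_col (Hm A lam t) = dim_row A"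
  unfolding Hm_def by auto

lemma Hm_carrier[simp]: "A \<in> carrier_mat n n \<Longrightarrow> Hm A lam t \<in> carrier_mat n n"
  unfolding Hm_def by auto

lemma nth_lin: "fps_nth (F * fps_of_poly [:c, d:]) t = c * fps_nth F t + d * (if t = 0 then 0 else fps_nth F (t - 1))"
  for F :: "complex fps"
proof -
  have e: "fps_of_poly [:c, d:] = fps_const c + fps_const d * fps_X"
    by (simp add: fps_of_poly_pCons fps_of_poly_const)
  have "F * fps_of_poly [:c, d:] = F * fps_const c + (F * fps_const d) * fps_X"
    by (subst e) (simp add: algebra_simps)
  thus ?thesis by (simp only: fps_add_nth fps_X_mult_right_nth) (simp add: mult_ac)
qed

lemma H_rel:
  assumes A: "A \<in> carrier_mat n n" and ev: "eigenvalue A lam"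
  shows "(if t = 0 then 0\<^sub>m n n else Hm A lam (t - 1)) = 
     Hm A lam t * (A - lam \<cdot>\<^sub>m 1\<^sub>m n) + (if t = alg_mult A lam then 1\<^sub>m n else 0\<^sub>m n n)"
proof (rule eq_matI)
  define M where "M = A - lam \<cdot>\<^sub>m 1\<^sub>m n"
  have M: "M \<in> carrier_mat n n" unfolding M_def using A by (intro minus_carrier_mat) auto
  fix i j assume ij: "i < dim_row (Hm A lam t * (A - lam \<cdot>\<^sub>m 1\<^sub>m n) + (if t = alg_mult A lam then 1\<^sub>m n else 0\<^sub>m n n))"
    "j < dim_col (Hm A lam t * (A - lam \<cdot>\<^sub>m 1\<^sub>m n) + (if t = alg_mult A lam then 1\<^sub>m n else 0\<^sub>m n n))"
  hence i: "i < n" and j: "j < n" using A by (auto split: if_splits)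
  define g where "g l = Gf A lam i l" for l
  have "fps_nth (\<Sum>l<n. g l * fps_of_poly [:-(M $$ (l,j)), (if l = j then 1 else 0):]) t = 
        fps_nth (if i = j then fps_X ^ alg_mult A lam else 0) t"
    using fps_rel[OF A ev i j] unfolding g_def M_def by simp
  hence "(\<Sum>l<n. -(M $$ (l,j)) * fps_nth (g l) t + (if l = j then 1 else 0) * (if t = 0 then 0 else fps_nth (g l) (t - 1)))
     = (if i = j \<and> t = alg_mult A lam then 1 else 0)"
    by (simp only: fps_sum_nth nth_lin) simp
  moreover have "(\<Sum>l<n. -(M $$ (l,j)) * fps_nth (g l) t + (if l = j then 1 else 0) * (if t = 0 then 0 else fps_nth (g l) (t - 1)))
     = (\<Sum>l<n. (if l = j then (if t = 0 then 0 else fps_nth (g l) (t - 1)) else 0) - fps_nth (g l) t * M $$ (l,j))"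
    by (rule sum.cong) auto
  moreover have "\<dots> = (if t = 0 then 0 else fps_nth (g j) (t - 1)) - (\<Sum>l<n. fps_nth (g l) t * M $$ (l,j))"
    by (simp only: sum_subtractf sum.delta' ) (use j in simp)
  ultimately have eq: "(if t = 0 then 0 else fps_nth (g j) (t - 1)) = (\<Sum>l<n. fps_nth (g l) t * M $$ (l,j)) + (if i = j \<and> t = alg_mult A lam then 1 else 0)"
    by (simp add: algebra_simps)
  show "(if t = 0 then 0\<^sub>m n n else Hm A lam (t - 1)) $$ (i, j) =
         (Hm A lam t * (A - lam \<cdot>\<^sub>m 1\<^sub>m n) + (if t = alg_mult A lam then 1\<^sub>m n else 0\<^sub>m n n)) $$ (i, j)"
    using eq A i j M unfolding M_def[symmetric] g_def
    by (auto simp: Hm_def scalar_prod_def lessThan_atLeast0 carrier_matD)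
qed (use A in auto)


context
  fixes A :: "complex mat" and n :: nat and lam :: complex
  assumes A: "A \<in> carrier_mat n n" and ev: "eigenvalue A lam"
begin

abbreviation "mm \<equiv> alg_mult A lam"
abbreviation "MM \<equiv> A - lam \<cdot>\<^sub>m 1\<^sub>m n"
abbreviation "HH \<equiv> Hm A lam"
abbreviation "PP \<equiv> Hm A lam (alg_mult A lam - 1)"

lemma m_pos: "mm \<ge> 1"
proof -
  have "poly (char_poly A) lam = 0" using ev eigenvalue_root_char_poly[OF A] by simp
  hence "order lam (char_poly A) \<noteq> 0" using order_root char_poly_nz[OF A] by blast
  thus ?thesis unfolding alg_mult_def by simp
qed

lemma MM_carrier[simp]: "MM \<in> carrier_mat n n"
  using A by (intro minus_carrier_mat) auto

lemma MM_mpoly: "MM = mpoly A [:-lam,1:]" using mpoly_lin[OF A] by simp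

lemma MM_pow: "MM ^\<^sub>m k = mpoly A ([:-lam,1:]^k)" using mpoly_power[OF A] MM_mpoly by simp

lemma HM_carrier: "HH t * MM \<in> carrier_mat n n"
  by (rule mult_carrier_mat[OF Hm_carrier[OF A] MM_carrier])

lemma R0: "HH 0 * MM = 0\<^sub>m n n"
  using H_rel[OF A ev, of 0] m_pos A right_add_zero_mat[OF HM_carrier[of 0]] by simp

lemma R1: "1 \<le> t \<Longrightarrow> t \<noteq> mm \<Longrightarrow> HH (t - 1) = HH t * MM"
  using H_rel[OF A ev, of t] A right_add_zero_mat[OF HM_carrier[of t]] by simp

lemma R2: "PP = HH mm * MM + 1\<^sub>m n"
  using H_rel[OF A ev, of mm] m_pos A by simp

lemma up: "HH mm * MM = HH (mm + k) * MM ^\<^sub>m Suc k"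
proof (induction k)
  case 0 then show ?case using A by simp
next
  case (Suc k)
  have "HH (mm + k) = HH (mm + Suc k) * MM" using R1[of "mm + Suc k"] by simp
  hence "HH (mm + k) * MM ^\<^sub>m Suc k = HH (mm + Suc k) * (MM * MM ^\<^sub>m Suc k)"
    using A by (simp add: assoc_mult_mat[of _ n n _ n _ n] del: pow_mat.simps)
  also have "MM * MM ^\<^sub>m Suc k = MM ^\<^sub>m Suc (Suc k)" 
    by (rule pow_mat_Suc_left[symmetric, OF MM_carrier])
  finally show ?case using Suc by simp
qed

lemma down: "k \<le> mm - 1 \<Longrightarrow> HH (mm - 1 - k) = PP * MM ^\<^sub>m k"
proof (induction k)
  case 0 then show ?case using A by simp
next
  case (Suc k)
  have "HH (mm - 1 - Suc k) = HH (mm - 1 - k) * MM" 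
    using R1[of "mm - 1 - k"] Suc.prems m_pos by (simp add: Suc_diff_Suc)
  also have "\<dots> = PP * MM ^\<^sub>m Suc k" using Suc A by (simp add: assoc_mult_mat[of _ n n _ n _ n])
  finally show ?case .
qed

lemma PM0: "PP * MM ^\<^sub>m mm = 0\<^sub>m n n"
proof -
  have "mm = Suc (mm - 1)" using m_pos by simp
  hence "MM ^\<^sub>m mm = MM ^\<^sub>m (mm - 1) * MM" by (metis pow_mat.simps(2))
  hence "PP * MM ^\<^sub>m mm = (PP * MM ^\<^sub>m (mm - 1)) * MM" using A by (simp add: assoc_mult_mat[of _ n n _ n _ n])
  also have "PP * MM ^\<^sub>m (mm - 1) = HH 0" using down[of "mm - 1"] by simp
  finally show ?thesis using R0 by simp
qed

lemma W_lam: "v \<in> gen_eigenspace A lam \<longleftrightarrow> v \<in> carrier_vec n \<and> MM ^\<^sub>m mm *\<^sub>v v = 0\<^sub>v n"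
  using gen_eig_mpoly[OF A, of lam] MM_pow by auto

lemma fix_lam:
  assumes v: "v \<in> gen_eigenspace A lam"
  shows "PP *\<^sub>v v = v"
proof -
  have vc: "v \<in> carrier_vec n" and vk: "MM ^\<^sub>m mm *\<^sub>v v = 0\<^sub>v n" using v W_lam by auto
  have "(HH mm * MM) *\<^sub>v v = HH (mm + (mm - 1)) *\<^sub>v (MM ^\<^sub>m mm *\<^sub>v v)"
    using up[of "mm - 1"] m_pos A vc by (simp add: assoc_mult_mat_vec[of _ n n _ n] del: pow_mat.simps)
  also have "\<dots> = 0\<^sub>v n" using vk A by simp
  finally have "(HH mm * MM) *\<^sub>v v = 0\<^sub>v n" .
  moreover have "(HH mm * MM + 1\<^sub>m n) *\<^sub>v v = (HH mm * MM) *\<^sub>v v + 1\<^sub>m n *\<^sub>v v"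
    using add_mult_distrib_mat_vec[OF HM_carrier[of mm] one_carrier_mat vc] .
  ultimately show ?thesis unfolding R2 using A vc by simp
qed

lemma kill:
  assumes mu: "eigenvalue A mu" "mu \<noteq> lam" and v: "v \<in> gen_eigenspace A mu"
  shows "PP *\<^sub>v v = 0\<^sub>v n"
proof -
  define g where "g = [:-lam,1:]^mm"
  define h where "h = [:-mu,1:]^alg_mult A mu"
  have vc: "v \<in> carrier_vec n" and vh: "mpoly A h *\<^sub>v v = 0\<^sub>v n" 
    using v gen_eig_mpoly[OF A, of mu] unfolding h_def by auto
  have "coprime g h" unfolding g_def h_def using lin_coprime[of lam mu] mu by simp
  then obtain a b where ab: "a * g + b * h = 1" using bezout_poly by blast
  have "v = mpoly A (a * g + b * h) *\<^sub>v v" using ab A vc by simp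
  also have "\<dots> = mpoly A g *\<^sub>v (mpoly A a *\<^sub>v v) + mpoly A b *\<^sub>v (mpoly A h *\<^sub>v v)"
    using A vc by (simp add: mpoly_add[OF A] add_mult_distrib_mat_vec[of _ n n] mpoly_mult_vec[symmetric] mult.commute)
  also have "\<dots> = MM ^\<^sub>m mm *\<^sub>v (mpoly A a *\<^sub>v v)" using vh A vc by (simp add: MM_pow g_def)
  finally have "PP *\<^sub>v v = PP *\<^sub>v (MM ^\<^sub>m mm *\<^sub>v (mpoly A a *\<^sub>v v))" by simp
  also have "\<dots> = (PP * MM ^\<^sub>m mm) *\<^sub>v (mpoly A a *\<^sub>v v)" 
    using A vc by (simp add: assoc_mult_mat_vec[of _ n n _ n])
  also have "\<dots> = 0\<^sub>v n" using PM0 A vc by simp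
  finally show ?thesis .
qed

lemma spec: "spectral_proj A lam = PP"
  unfolding spectral_proj_def
proof (rule the_equality)
  have dA: "dim_row A = n" using A by simp
  show "PP \<in> carrier_mat (dim_row A) (dim_row A) \<and> (\<forall>v\<in>gen_eigenspace A lam. PP *\<^sub>v v = v) \<and>
    (\<forall>mu. eigenvalue A mu \<and> mu \<noteq> lam \<longrightarrow> (\<forall>v\<in>gen_eigenspace A mu. PP *\<^sub>v v = 0\<^sub>v (dim_row A)))"
    unfolding dA using A fix_lam kill by auto
  fix P assume P: "P \<in> carrier_mat (dim_row A) (dim_row A) \<and> (\<forall>v\<in>gen_eigenspace A lam. P *\<^sub>v v = v) \<and>
    (\<forall>mu. eigenvalue A mu \<and> mu \<noteq> lam \<longrightarrow> (\<forall>v\<in>gen_eigenspace A mu. P *\<^sub>v v = 0\<^sub>v (dim_row A)))"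
  show "P = PP"
  proof (rule uniq[OF A])
    show "P \<in> carrier_mat n n" using P dA by simp
    show "PP \<in> carrier_mat n n" using A by simp
    fix mu v assume "eigenvalue A mu" "v \<in> gen_eigenspace A mu"
    thus "P *\<^sub>v v = PP *\<^sub>v v" using P fix_lam kill dA by (cases "mu = lam") auto
  qed
qed

lemma PP_carrier[simp]: "PP \<in> carrier_mat n n" by (rule Hm_carrier[OF A])

lemma PP_idem: "PP * PP = PP"
proof (rule uniq[OF A])
  show "PP * PP \<in> carrier_mat n n" by (rule mult_carrier_mat[OF PP_carrier PP_carrier])
  show "PP \<in> carrier_mat n n" by (rule PP_carrier)
  fix mu v assume mu: "eigenvalue A mu" and v: "v \<in> gen_eigenspace A mu"
  have vc: "v \<in> carrier_vec n" using v A unfolding gen_eigenspace_def by auto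
  have "(PP * PP) *\<^sub>v v = PP *\<^sub>v (PP *\<^sub>v v)" by (rule assoc_mult_mat_vec[OF PP_carrier PP_carrier vc])
  also have "\<dots> = PP *\<^sub>v v"
  proof (cases "mu = lam")
    case True thus ?thesis using fix_lam v by simp
  next
    case False thus ?thesis using kill[OF mu False v] mat_zero_vec[OF PP_carrier] by simp
  qed
  finally show "(PP * PP) *\<^sub>v v = PP *\<^sub>v v" .
qed

lemma MP_comm: "MM * PP = PP * MM"
proof (rule uniq[OF A])
  show "MM * PP \<in> carrier_mat n n" by (rule mult_carrier_mat[OF MM_carrier PP_carrier])
  show "PP * MM \<in> carrier_mat n n" by (rule mult_carrier_mat[OF PP_carrier MM_carrier])
  fix mu v assume mu: "eigenvalue A mu" and v: "v \<in> gen_eigenspace A mu"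
  have vc: "v \<in> carrier_vec n" using v A unfolding gen_eigenspace_def by auto
  have Mv: "MM *\<^sub>v v \<in> gen_eigenspace A mu"
  proof -
    have k: "mpoly A ([:-mu,1:]^alg_mult A mu) *\<^sub>v v = 0\<^sub>v n" using v gen_eig_mpoly[OF A, of mu] by auto
    have "mpoly A ([:-mu,1:]^alg_mult A mu) *\<^sub>v (MM *\<^sub>v v) = MM *\<^sub>v (mpoly A ([:-mu,1:]^alg_mult A mu) *\<^sub>v v)"
      unfolding MM_mpoly using A vc by (simp add: mpoly_mult_vec[symmetric] mult.commute)
    thus ?thesis using k gen_eig_mpoly[OF A, of mu] vc mult_mat_vec_carrier[OF MM_carrier vc] by simp
  qed
  have "(MM * PP) *\<^sub>v v = MM *\<^sub>v (PP *\<^sub>v v)" by (rule assoc_mult_mat_vec[OF MM_carrier PP_carrier vc])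
  also have "\<dots> = PP *\<^sub>v (MM *\<^sub>v v)"
  proof (cases "mu = lam")
    case True thus ?thesis using fix_lam v Mv by simp
  next
    case False thus ?thesis using kill[OF mu False v] kill[OF mu False Mv] mat_zero_vec[OF MM_carrier] by simp
  qed
  also have "\<dots> = (PP * MM) *\<^sub>v v" by (rule assoc_mult_mat_vec[OF PP_carrier MM_carrier vc, symmetric])
  finally show "(MM * PP) *\<^sub>v v = (PP * MM) *\<^sub>v v" .
qed

lemma nil: 
  assumes "mm \<ge> 2"
  shows "nilp_part A lam * spectral_proj A lam = HH (mm - 2)"
proof -
  have dA: "dim_row A = n" using A by simp
  have "nilp_part A lam * spectral_proj A lam = (MM * PP) * PP" unfolding nilp_part_def spec dA ..
  also have "\<dots> = MM * (PP * PP)" by (rule assoc_mult_mat[OF MM_carrier PP_carrier PP_carrier])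
  also have "\<dots> = PP * MM" using PP_idem MP_comm by simp
  also have "\<dots> = HH (mm - 2)"
  proof -
    have r: "HH (mm - 1 - 1) = PP * MM" by (rule R1) (use assms in auto)
    have e: "mm - 1 - 1 = mm - 2" by simp
    show ?thesis using r unfolding e by (rule sym)
  qed
  finally show ?thesis .
qed

lemma rhs_eq: "mat n n (\<lambda>(j, k). (1 / fact t) * (deriv ^^ t) (\<lambda>z. adj_res A z $$ (j, k) / q_fun A lam z) lam) = HH t"
  using A by (auto intro!: eq_matI simp: link[OF A] Hm_def)

end


theorem theorem5:
  fixes A :: "complex mat" and n :: nat and lam :: complex
  assumes "A \<in> carrier_mat n n" and "eigenvalue A lam"
  shows "spectral_proj A lam = mat n n (\<lambda>(j, k).
            (1 / fact (alg_mult A lam - 1)) *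
            (deriv ^^ (alg_mult A lam - 1)) (\<lambda>z. adj_res A z $$ (j, k) / q_fun A lam z) lam)
       \<and> (alg_mult A lam \<ge> 2 \<longrightarrow>
         nilp_part A lam * spectral_proj A lam = mat n n (\<lambda>(j, k).
            (1 / fact (alg_mult A lam - 2)) *
            (deriv ^^ (alg_mult A lam - 2)) (\<lambda>z. adj_res A z $$ (j, k) / q_fun A lam z) lam))"
  using spec[OF assms] nil[OF assms] rhs_eq[OF assms] by simp

end
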